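(* Let $V$ be an $n$-dimensional Euclidean space, $1\le p\le n$, let $\theta$ be a quadratic form on $V$ and $\tau=\tau_i\omega^i\in V^*$ a $1$-form such that $\theta-\tau\otimes\tau$ is $p$-positive semi-definite. Then for every $(p-1)$-form $\xi$ on $V$ one has $\tau\wedge\xi\in\mathrm{Im}F_\theta$ (with $F_\theta$ acting on $p$-forms), and for every $p$-form $f\in\mathrm{Im}F_\theta$, $$\langle F_\theta^{-1}f,\tau\wedge\xi\rangle\le\langle F_\theta^{-1}f,f\rangle^{1/2}|\xi| .$$ In particular $\langle F_\theta^{-1}(\tau\wedge\xi),\tau\wedge\xi\rangle\le|\xi|^2$.
   Context: Let $e_1,\dots,e_n$ be an orthonormal basis of $V$ with dual basis $\omega^1,\dots,\omega^n$; summation over repeated indices. A quadratic form (symmetric bilinear form) $\theta=\theta_{ij}\omega^i\otimes\omega^j$ is called $p$-positive definite (resp. $p$-positive semi-definite) if the sum of any $p$ of the eigenvalues of the symmetric matrix $(\theta_{ij})$ (counted with multiplicity) is positive (resp. nonnegative). For such $\theta$, $F_\theta$ denotes the self-adjoint operator on $p$-forms $F_\theta g=\theta_{jk}\,\omega^k\wedge(e_j\lrcorner g)$, where $\lrcorner$ is interior product. For a self-adjoint operator $F$ on $\Lambda^pV^*$ one has $\Lambda^pV^*=\ker F\oplus\mathrm{Im}F$, and $F^{-1}$ denotes $(F|_{\mathrm{Im}F})^{-1}:\mathrm{Im}F\to\mathrm{Im}F$ ($F$ need not be invertible). *)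

theory Defs
  imports "HOL-Analysis.Analysis" "Jordan_Normal_Form.Char_Poly"
begin

text \<open>Exterior forms on V = R^n with orthonormal basis e_0,...,e_(n-1), dual basis w^0,...,w^(n-1).
  A p-form is represented by its coefficients with respect to the basis
  e^I = w^(i_1) wedge ... wedge w^(i_p), i_1 < ... < i_p, indexed by the set I.\<close>

type_synonym form = "nat set \<Rightarrow> real"

definition forms :: "nat \<Rightarrow> nat \<Rightarrow> form set" where
  "forms n p = {f. \<forall>I. f I \<noteq> 0 \<longrightarrow> I \<subseteq> {..<n} \<and> card I = p}"

definition idx :: "nat \<Rightarrow> nat \<Rightarrow> nat set set" where
  "idx n p = {I. I \<subseteq> {..<n} \<and> card I = p}"

definition form_inner :: "nat \<Rightarrow> nat \<Rightarrow> form \<Rightarrow> form \<Rightarrow> real" where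
  "form_inner n p f g = (\<Sum>I\<in>idx n p. f I * g I)"

definition form_norm :: "nat \<Rightarrow> nat \<Rightarrow> form \<Rightarrow> real" where
  "form_norm n p f = sqrt (form_inner n p f f)"

text \<open>Sign of moving w^k past the w^i with i in I, i < k.\<close>
definition sgn_pos :: "nat \<Rightarrow> nat set \<Rightarrow> real" where
  "sgn_pos k I = (-1) ^ card {i\<in>I. i < k}"

definition wedge1 :: "nat \<Rightarrow> (nat \<Rightarrow> real) \<Rightarrow> form \<Rightarrow> form" where
  "wedge1 n \<tau> \<xi> = (\<lambda>J. \<Sum>k\<in>J \<inter> {..<n}. \<tau> k * sgn_pos k (J - {k}) * \<xi> (J - {k}))"

definition interior :: "nat \<Rightarrow> form \<Rightarrow> form" where
  "interior j g = (\<lambda>I. if j \<in> I then 0 else sgn_pos j I * g (insert j I))"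

definition F_op :: "nat \<Rightarrow> (nat \<Rightarrow> nat \<Rightarrow> real) \<Rightarrow> form \<Rightarrow> form" where
  "F_op n \<theta> g = (\<lambda>J. \<Sum>j<n. wedge1 n (\<lambda>k. \<theta> j k) (interior j g) J)"

definition F_img :: "nat \<Rightarrow> nat \<Rightarrow> (nat \<Rightarrow> nat \<Rightarrow> real) \<Rightarrow> form set" where
  "F_img n p \<theta> = F_op n \<theta> ` forms n p"

definition F_inv :: "nat \<Rightarrow> nat \<Rightarrow> (nat \<Rightarrow> nat \<Rightarrow> real) \<Rightarrow> form \<Rightarrow> form" where
  "F_inv n p \<theta> f = (THE g. g \<in> F_img n p \<theta> \<and> F_op n \<theta> g = f)"

definition qf_mat :: "nat \<Rightarrow> (nat \<Rightarrow> nat \<Rightarrow> real) \<Rightarrow> real mat" where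
  "qf_mat n \<theta> = mat n n (\<lambda>(i, j). \<theta> i j)"

definition eigvals :: "nat \<Rightarrow> (nat \<Rightarrow> nat \<Rightarrow> real) \<Rightarrow> real multiset" where
  "eigvals n \<theta> = proots (char_poly (qf_mat n \<theta>))"

definition p_pos_semidef :: "nat \<Rightarrow> nat \<Rightarrow> (nat \<Rightarrow> nat \<Rightarrow> real) \<Rightarrow> bool" where
  "p_pos_semidef n p \<theta> =
     (\<forall>M. M \<subseteq># eigvals n \<theta> \<and> size M = p \<longrightarrow> 0 \<le> sum_mset M)"

end

theory Submission
  imports Defs
begin


lemma sym_eig_nat:
  fixes A :: "nat \<Rightarrow> nat \<Rightarrow> real"
  assumes N: "0 < N" and sym: "\<And>i j. i < N \<Longrightarrow> j < N \<Longrightarrow> A i j = A j i"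
  shows "\<exists>l u. (\<exists>i<N. u i \<noteq> 0) \<and> (\<forall>i<N. (\<Sum>j<N. A i j * u j) = l * u i)"
proof -
  define C where "C = mat N N (\<lambda>(i,j). complex_of_real (A i j))"
  have C: "C \<in> carrier_mat N N" unfolding C_def by simp
  obtain as where cp: "char_poly C = (\<Prod>a\<leftarrow>as. [:- a, 1:])" and len: "length as = N"
    using char_poly_factorized[OF C] by blast
  then obtain z as' where as: "as = z # as'" using N by (cases as) auto
  have "poly (char_poly C) z = 0" unfolding cp as by simp
  hence "eigenvalue C z" using eigenvalue_root_char_poly[OF C] by simp
  then obtain v where ev: "eigenvector C v z" unfolding eigenvalue_def by blast
  hence v: "v \<in> carrier_vec N" and v0: "v \<noteq> 0\<^sub>v N" and Cv: "C *\<^sub>v v = z \<cdot>\<^sub>v v"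
    using C unfolding eigenvector_def by auto
  define x where "x i = v $ i" for i
  have eq: "(\<Sum>j<N. complex_of_real (A i j) * x j) = z * x i" if i: "i < N" for i
  proof -
    have "(C *\<^sub>v v) $ i = (z \<cdot>\<^sub>v v) $ i" using Cv by simp
    thus ?thesis using i v C unfolding x_def C_def
      by (simp add: scalar_prod_def row_def lessThan_atLeast0)
  qed
  obtain i0 where i0: "i0 < N" "x i0 \<noteq> 0"
    using v0 v unfolding x_def by (metis eq_vecI carrier_vecD index_zero_vec(1,2))
  define r where "r = (\<Sum>i<N. cnj (x i) * x i)"
  have rr: "r = complex_of_real (\<Sum>i<N. (cmod (x i))^2)"
    unfolding r_def of_real_sum
    by (intro sum.cong refl) (metis complex_norm_square mult.commute)
  have rpos: "(\<Sum>i<N. (cmod (x i))^2) > 0"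
    by (rule sum_pos2[of _ i0]) (use i0 in auto)
  define S where "S = (\<Sum>i<N. cnj (x i) * (\<Sum>j<N. complex_of_real (A i j) * x j))"
  have "S = (\<Sum>i<N. cnj (x i) * (z * x i))" unfolding S_def
    by (rule sum.cong) (simp_all add: eq)
  hence S1: "S = z * r" unfolding r_def by (simp add: sum_distrib_left mult_ac)
  have "cnj S = (\<Sum>i<N. x i * (\<Sum>j<N. complex_of_real (A i j) * cnj (x j)))"
    unfolding S_def by simp
  also have "\<dots> = (\<Sum>i<N. \<Sum>j<N. complex_of_real (A i j) * x i * cnj (x j))"
    by (simp add: sum_distrib_left mult_ac)
  also have "\<dots> = (\<Sum>j<N. \<Sum>i<N. complex_of_real (A i j) * x i * cnj (x j))"
    by (rule sum.swap)
  also have "\<dots> = S" unfolding S_def sum_distrib_left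
  proof (intro sum.cong refl)
    fix j i assume "j \<in> {..<N}" "i \<in> {..<N}"
    hence "A i j = A j i" using sym[of i j] by simp
    thus "complex_of_real (A i j) * x i * cnj (x j) = cnj (x j) * (complex_of_real (A j i) * x i)"
      by simp
  qed
  finally have "cnj S = S" .
  hence "cnj z * r = z * r" using S1 rr by simp
  moreover have "r \<noteq> 0" unfolding rr using rpos by (simp del: of_real_sum of_real_power)
  ultimately have zr: "cnj z = z" by simp
  hence "Im (cnj z) = Im z" by simp
  hence Imz: "Im z = 0" by simp
  have eqRe: "(\<Sum>j<N. A i j * Re (x j)) = Re z * Re (x i)" if "i < N" for i
  proof -
    have "Re (\<Sum>j<N. complex_of_real (A i j) * x j) = Re (z * x i)" using eq[OF that] by (rule arg_cong)
    moreover have "Re (\<Sum>j<N. complex_of_real (A i j) * x j) = (\<Sum>j<N. A i j * Re (x j))"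
      by (simp add: Re_sum)
    moreover have "Re (z * x i) = Re z * Re (x i)" using Imz by simp
    ultimately show ?thesis by simp
  qed
  have eqIm: "(\<Sum>j<N. A i j * Im (x j)) = Re z * Im (x i)" if "i < N" for i
  proof -
    have "Im (\<Sum>j<N. complex_of_real (A i j) * x j) = Im (z * x i)" using eq[OF that] by (rule arg_cong)
    moreover have "Im (\<Sum>j<N. complex_of_real (A i j) * x j) = (\<Sum>j<N. A i j * Im (x j))"
      by (simp add: Im_sum)
    moreover have "Im (z * x i) = Re z * Im (x i)" using Imz by simp
    ultimately show ?thesis by simp
  qed
  show ?thesis
  proof (cases "Re (x i0) = 0")
    case True
    hence "Im (x i0) \<noteq> 0" using i0(2) complex_eqI[of "x i0" 0] by auto
    show ?thesis
      by (rule exI[of _ "Re z"], rule exI[of _ "\<lambda>j. Im (x j)"]) (use eqIm i0 \<open>Im (x i0) \<noteq> 0\<close> in auto)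
  next
    case False
    show ?thesis
      by (rule exI[of _ "Re z"], rule exI[of _ "\<lambda>j. Re (x j)"]) (use eqRe i0 False in auto)
  qed
qed



lemma sym_eig_K:
  fixes A :: "'a \<Rightarrow> 'a \<Rightarrow> real"
  assumes K: "finite K" "K \<noteq> {}" and sym: "\<And>i j. i\<in>K \<Longrightarrow> j\<in>K \<Longrightarrow> A i j = A j i"
  shows "\<exists>l v. (\<Sum>i\<in>K. v i * v i) = 1 \<and> (\<forall>i\<in>K. (\<Sum>j\<in>K. A i j * v j) = l * v i)"
proof -
  define N where "N = card K"
  have N: "0 < N" using K unfolding N_def by (simp add: card_gt_0_iff)
  obtain e where e: "bij_betw e {..<N} K"
    using ex_bij_betw_nat_finite[OF K(1)] unfolding N_def lessThan_atLeast0 by blast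
  have eK: "e i \<in> K" if "i < N" for i using e that by (auto simp: bij_betw_def)
  obtain l u where u0: "\<exists>i<N. u i \<noteq> 0" and u: "\<forall>i<N. (\<Sum>j<N. A (e i) (e j) * u j) = l * u i"
    using sym_eig_nat[OF N, of "\<lambda>i j. A (e i) (e j)"] sym eK by blast
  define s where "s = (\<Sum>i<N. u i * u i)"
  have spos: "s > 0" unfolding s_def using u0 by (auto intro!: sum_pos2 simp: zero_less_mult_iff linorder_neq_iff)
  define v where "v k = u (inv_into {..<N} e k) / sqrt s" for k
  have ve: "v (e i) = u i / sqrt s" if "i < N" for i
    unfolding v_def using bij_betw_inv_into_left[OF e] that by simp
  have reidx: "(\<Sum>j\<in>K. f j) = (\<Sum>j<N. f (e j))" for f :: "'a \<Rightarrow> real"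
    using sum.reindex_bij_betw[OF e, of f] by simp
  have "(\<Sum>i\<in>K. v i * v i) = (\<Sum>i<N. u i * u i / s)"
    unfolding reidx using spos by (intro sum.cong refl) (simp add: ve)
  also have "\<dots> = 1" using spos unfolding s_def[symmetric] sum_divide_distrib[symmetric] by simp
  finally have n1: "(\<Sum>i\<in>K. v i * v i) = 1" .
  have "(\<Sum>j\<in>K. A i j * v j) = l * v i" if i: "i \<in> K" for i
  proof -
    obtain i' where i': "i' < N" "i = e i'" using i e by (auto simp: bij_betw_def)
    have "(\<Sum>j\<in>K. A i j * v j) = (\<Sum>j<N. A (e i') (e j) * u j) / sqrt s"
      unfolding reidx i'(2) sum_divide_distrib by (intro sum.cong refl) (simp add: ve)
    also have "\<dots> = l * v i" using u i' ve by simp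
    finally show ?thesis .
  qed
  thus ?thesis using n1 by blast
qed

lemma householder:
  fixes v :: "'a \<Rightarrow> real"
  assumes K: "finite K" and a: "a \<in> K" and v1: "(\<Sum>i\<in>K. v i * v i) = 1"
  shows "\<exists>H. (\<forall>i\<in>K. \<forall>j\<in>K. H i j = H j i)
           \<and> (\<forall>i\<in>K. \<forall>j\<in>K. (\<Sum>k\<in>K. H i k * H k j) = (if i = j then 1 else 0))
           \<and> (\<forall>i\<in>K. H i a = v i)"
proof -
  define D :: "'a \<Rightarrow> 'a \<Rightarrow> real" where "D i j = (if i = j then 1 else 0)" for i j
  have DD: "(\<Sum>k\<in>K. D i k * D k j) = D i j" if "i \<in> K" for i j
    using K that by (simp add: D_def if_distrib[where f="\<lambda>x. x * _"] sum.delta cong: if_cong)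
  have Dw: "(\<Sum>k\<in>K. D i k * w k) = w i" if "i \<in> K" for i w
    using K that by (simp add: D_def if_distrib[where f="\<lambda>x. x * _"] sum.delta cong: if_cong)
  have wD: "(\<Sum>k\<in>K. w k * D k j) = w j" if "j \<in> K" for j w
    using K that by (simp add: D_def if_distrib[where f="\<lambda>x. _ * x"] sum.delta' cong: if_cong)
  show ?thesis
  proof (cases "v a = 1")
    case True
    have "(\<Sum>i\<in>K. v i * v i) = v a * v a + (\<Sum>i\<in>K-{a}. v i * v i)"
      using K a by (simp add: sum.remove)
    hence "(\<Sum>i\<in>K-{a}. v i * v i) = 0" using True v1 by simp
    hence "\<forall>i\<in>K-{a}. v i * v i = 0" using K by (subst (asm) sum_nonneg_eq_0_iff) auto
    hence vz: "v i = 0" if "i \<in> K" "i \<noteq> a" for i using that by auto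
    show ?thesis
      by (rule exI[of _ D]) (use DD vz True in \<open>auto simp: D_def\<close>)
  next
    case False
    define w where "w i = v i - D i a" for i
    define c where "c = (\<Sum>k\<in>K. w k * w k)"
    have "c = (\<Sum>k\<in>K. v k * v k - 2 * (v k * D k a) + D k a * D k a)"
      unfolding c_def w_def by (intro sum.cong refl) (simp add: algebra_simps)
    also have "\<dots> = 1 - 2 * v a + 1"
      using a K v1 wD[of a v]
      by (simp add: sum.distrib sum_subtractf sum_distrib_left[symmetric] D_def if_distrib[where f="\<lambda>x. x * _"] sum.delta' cong: if_cong)
    finally have c: "c = 2 - 2 * v a" by simp
    have c0: "c \<noteq> 0" using c False by simp
    define H where "H i j = D i j - 2 / c * (w i * w j)" for i j
    have "(\<Sum>k\<in>K. H i k * H k j) = D i j" if ij: "i \<in> K" "j \<in> K" for i j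
    proof -
      have "(\<Sum>k\<in>K. H i k * H k j) = (\<Sum>k\<in>K. D i k * D k j - (2/c * w j) * (D i k * w k)
           - (2/c * w i) * (w k * D k j) + ((2/c)^2 * w i * w j) * (w k * w k))"
        unfolding H_def by (intro sum.cong refl) (simp add: algebra_simps power2_eq_square)
      also have "\<dots> = D i j - (2/c * w j) * w i - (2/c * w i) * w j + ((2/c)^2 * w i * w j) * c"
        unfolding sum.distrib sum_subtractf sum_distrib_left[symmetric] using ij
        by (simp only: DD Dw wD c_def[symmetric])
      also have "\<dots> = D i j" using c0 by (simp add: power2_eq_square field_simps)
      finally show ?thesis .
    qed
    moreover have "H i a = v i" if "i \<in> K" for i
    proof -
      have wa: "w a = v a - 1" unfolding w_def D_def by simp
      have "H i a = D i a - 2 / c * w i * (v a - 1)" unfolding H_def wa by simp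
      also have "\<dots> = D i a + w i" using c0 unfolding c by (simp add: field_simps)
      finally show ?thesis unfolding w_def by simp
    qed
    ultimately show ?thesis
      by (intro exI[of _ H]) (auto simp: H_def D_def mult.commute)
  qed
qed

definition mm :: "'a set \<Rightarrow> ('a \<Rightarrow> 'a \<Rightarrow> real) \<Rightarrow> ('a \<Rightarrow> 'a \<Rightarrow> real) \<Rightarrow> 'a \<Rightarrow> 'a \<Rightarrow> real" where
  "mm K X Y i j = (\<Sum>k\<in>K. X i k * Y k j)"

lemma mm_assoc: "mm K (mm K X Y) Z i j = mm K X (mm K Y Z) i j"
  unfolding mm_def sum_distrib_left sum_distrib_right
  by (subst sum.swap) (simp add: mult_ac)

lemma mm_cong_left: "(\<And>k. k \<in> K \<Longrightarrow> X i k = X' i k) \<Longrightarrow> mm K X Y i j = mm K X' Y i j"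
  unfolding mm_def by simp

lemma mm_cong_right: "(\<And>k. k \<in> K \<Longrightarrow> Y k j = Y' k j) \<Longrightarrow> mm K X Y i j = mm K X Y' i j"
  unfolding mm_def by simp

lemma delta_right: "finite F \<Longrightarrow> k \<in> F \<Longrightarrow> (\<Sum>q\<in>F. f q * (if k = q then 1 else 0)) = (f k :: real)"
  by (simp add: if_distrib[where f="\<lambda>x. _ * x"] sum.delta cong: if_cong)

lemma delta_left: "finite F \<Longrightarrow> k \<in> F \<Longrightarrow> (\<Sum>q\<in>F. (if q = k then 1 else 0) * f q) = (f k :: real)"
  by (simp add: if_distrib[where f="\<lambda>x. x * _"] sum.delta' cong: if_cong)

lemma triple_sum:
  "(\<Sum>k\<in>F. \<Sum>q\<in>F. x k * (\<Sum>m\<in>M. c m * y k m * z q m) * w q)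
   = (\<Sum>m\<in>M. c m * (\<Sum>k\<in>F. x k * y k m) * (\<Sum>q\<in>F. z q m * w q :: real))"
proof -
  have "(\<Sum>k\<in>F. \<Sum>q\<in>F. x k * (\<Sum>m\<in>M. c m * y k m * z q m) * w q)
      = (\<Sum>k\<in>F. \<Sum>q\<in>F. \<Sum>m\<in>M. c m * (x k * y k m) * (z q m * w q))"
    by (simp add: sum_distrib_left sum_distrib_right mult_ac)
  also have "\<dots> = (\<Sum>k\<in>F. \<Sum>m\<in>M. \<Sum>q\<in>F. c m * (x k * y k m) * (z q m * w q))"
    by (rule sum.cong[OF refl], rule sum.swap)
  also have "\<dots> = (\<Sum>m\<in>M. \<Sum>k\<in>F. \<Sum>q\<in>F. c m * (x k * y k m) * (z q m * w q))"
    by (rule sum.swap)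
  also have "\<dots> = (\<Sum>m\<in>M. c m * (\<Sum>k\<in>F. x k * y k m) * (\<Sum>q\<in>F. z q m * w q))"
    by (simp add: sum_distrib_left sum_distrib_right mult_ac)
  finally show ?thesis .
qed

lemma prod_sums:
  "(\<Sum>m\<in>M. (\<Sum>k\<in>F. x k * y k m) * (\<Sum>q\<in>F. z q * w q m))
   = (\<Sum>k\<in>F. \<Sum>q\<in>F. x k * z q * (\<Sum>m\<in>M. y k m * w q m :: real))"
proof -
  have "(\<Sum>m\<in>M. (\<Sum>k\<in>F. x k * y k m) * (\<Sum>q\<in>F. z q * w q m))
      = (\<Sum>m\<in>M. \<Sum>k\<in>F. \<Sum>q\<in>F. x k * z q * (y k m * w q m))"
    apply (simp add: sum_distrib_left sum_distrib_right mult_ac)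
    apply (rule sum.cong[OF refl], rule sum.swap)
    done
  also have "\<dots> = (\<Sum>k\<in>F. \<Sum>m\<in>M. \<Sum>q\<in>F. x k * z q * (y k m * w q m))"
    by (rule sum.swap)
  also have "\<dots> = (\<Sum>k\<in>F. \<Sum>q\<in>F. \<Sum>m\<in>M. x k * z q * (y k m * w q m))"
    by (rule sum.cong[OF refl], rule sum.swap)
  also have "\<dots> = (\<Sum>k\<in>F. \<Sum>q\<in>F. x k * z q * (\<Sum>m\<in>M. y k m * w q m))"
    by (simp add: sum_distrib_left)
  finally show ?thesis .
qed

theorem spectral:
  fixes A :: "'a \<Rightarrow> 'a \<Rightarrow> real"
  assumes "finite K" and "\<And>i j. i \<in> K \<Longrightarrow> j \<in> K \<Longrightarrow> A i j = A j i"
  shows "\<exists>U l. (\<forall>m\<in>K. \<forall>m'\<in>K. (\<Sum>i\<in>K. U i m * U i m') = (if m = m' then 1 else 0))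
          \<and> (\<forall>i\<in>K. \<forall>j\<in>K. (\<Sum>m\<in>K. U i m * U j m) = (if i = j then 1 else 0))
          \<and> (\<forall>i\<in>K. \<forall>j\<in>K. A i j = (\<Sum>m\<in>K. l m * U i m * U j m))"
  using assms
proof (induction K arbitrary: A rule: finite_induct)
  case empty thus ?case by simp
next
  case (insert a F A)
  define K where "K = insert a F"
  have K: "finite K" "K \<noteq> {}" "a \<in> K" using insert(1) by (auto simp: K_def)
  have aF: "a \<notin> F" "finite F" by fact+
  have sumK: "(\<Sum>k\<in>K. f k) = f a + (\<Sum>k\<in>F. f k)" for f :: "'a \<Rightarrow> real"
    unfolding K_def using aF by simp
  have symA: "A i j = A j i" if "i\<in>K" "j\<in>K" for i j using insert.prems that K_def by auto
  have "\<exists>l v. (\<Sum>i\<in>K. v i * v i) = 1 \<and> (\<forall>i\<in>K. (\<Sum>j\<in>K. A i j * v j) = l * v i)"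
    by (rule sym_eig_K[OF K(1,2)]) (rule symA)
  then obtain l0 v where v1: "(\<Sum>i\<in>K. v i * v i) = 1" and ev: "\<forall>i\<in>K. (\<Sum>j\<in>K. A i j * v j) = l0 * v i"
    by blast
  obtain H where Hs: "\<forall>i\<in>K. \<forall>j\<in>K. H i j = H j i"
    and HH: "\<forall>i\<in>K. \<forall>j\<in>K. (\<Sum>k\<in>K. H i k * H k j) = (if i = j then 1 else 0)"
    and Ha: "\<forall>i\<in>K. H i a = v i"
    using householder[OF K(1) K(3) v1] by blast
  have HHm: "mm K H H i j = (if i = j then 1 else 0)" if "i\<in>K" "j\<in>K" for i j
    using HH that by (simp add: mm_def)
  define B where "B = mm K H (mm K A H)"
  have Bexp: "B i j = (\<Sum>k\<in>K. \<Sum>q\<in>K. H i k * A k q * H q j)" for i j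
    unfolding B_def mm_def by (simp add: sum_distrib_left mult_ac)
  have Bsym: "B i j = B j i" if ij: "i\<in>K" "j\<in>K" for i j
  proof -
    have "B j i = (\<Sum>q\<in>K. \<Sum>k\<in>K. H j k * A k q * H q i)" unfolding Bexp by (rule sum.swap)
    also have "\<dots> = B i j" unfolding Bexp
    proof (intro sum.cong refl)
      fix k q assume "k \<in> K" "q \<in> K"
      thus "H j q * A q k * H k i = H i k * A k q * H q j"
        using Hs ij symA[of q k] by auto
    qed
    finally show ?thesis by simp
  qed
  have BHa: "B j a = (if j = a then l0 else 0)" if j: "j\<in>K" for j
  proof -
    have "B j a = (\<Sum>k\<in>K. H j k * (\<Sum>q\<in>K. A k q * v q))"
      unfolding B_def mm_def using Ha by simp
    also have "\<dots> = l0 * (\<Sum>k\<in>K. H j k * H k a)"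
      using ev Ha by (simp add: sum_distrib_left mult_ac)
    also have "\<dots> = (if j = a then l0 else 0)" using HH j K(3) by simp
    finally show ?thesis .
  qed
  have AB: "A i j = mm K H (mm K B H) i j" if ij: "i\<in>K" "j\<in>K" for i j
  proof -
    have 1: "mm K B H k j = mm K H A k j" if k: "k \<in> K" for k
    proof -
      have "mm K B H k j = mm K H (mm K (mm K A H) H) k j" unfolding B_def by (rule mm_assoc)
      also have "\<dots> = mm K H (mm K A (mm K H H)) k j"
        by (rule mm_cong_right) (rule mm_assoc)
      also have "\<dots> = mm K H A k j"
      proof (rule mm_cong_right)
        fix p assume p: "p \<in> K"
        have "mm K A (mm K H H) p j = (\<Sum>q\<in>K. A p q * (if q = j then 1 else 0))"
          unfolding mm_def[of K A] using HHm ij by simp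
        also have "\<dots> = A p j" using delta_right[OF K(1) ij(2), of "A p"] by (simp add: eq_commute)
        finally show "mm K A (mm K H H) p j = A p j" .
      qed
      finally show ?thesis .
    qed
    have "mm K H (mm K B H) i j = mm K H (mm K H A) i j" by (rule mm_cong_right) (rule 1)
    also have "\<dots> = mm K (mm K H H) A i j" by (rule mm_assoc[symmetric])
    also have "\<dots> = (\<Sum>k\<in>K. (if i = k then 1 else 0) * A k j)"
      unfolding mm_def[of K "mm K H H"] using HHm ij by simp
    also have "\<dots> = A i j" using delta_left[OF K(1) ij(1), of "\<lambda>k. A k j"] by (simp add: eq_commute)
    finally show ?thesis by simp
  qed
  have "\<exists>U l. (\<forall>m\<in>F. \<forall>m'\<in>F. (\<Sum>i\<in>F. U i m * U i m') = (if m = m' then 1 else 0))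
          \<and> (\<forall>i\<in>F. \<forall>j\<in>F. (\<Sum>m\<in>F. U i m * U j m) = (if i = j then 1 else 0))
          \<and> (\<forall>i\<in>F. \<forall>j\<in>F. B i j = (\<Sum>m\<in>F. l m * U i m * U j m))"
    by (rule insert.IH) (use Bsym K_def in auto)
  then obtain U' l' where U'c: "\<forall>m\<in>F. \<forall>m'\<in>F. (\<Sum>i\<in>F. U' i m * U' i m') = (if m = m' then 1 else 0)"
    and U'r: "\<forall>i\<in>F. \<forall>j\<in>F. (\<Sum>m\<in>F. U' i m * U' j m) = (if i = j then 1 else 0)"
    and U'd: "\<forall>i\<in>F. \<forall>j\<in>F. B i j = (\<Sum>m\<in>F. l' m * U' i m * U' j m)" by blast
  define U where "U i m = (if m = a then v i else (\<Sum>k\<in>F. H i k * U' k m))" for i m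
  define l where "l m = (if m = a then l0 else l' m)" for m
  have FK: "x \<in> K" if "x \<in> F" for x using that K_def by auto
  have Fa: "x \<noteq> a" if "x \<in> F" for x using that aF by auto
  have Baq: "B a q = 0" "B q a = 0" if "q \<in> F" for q
    using BHa[OF FK[OF that]] Bsym[OF K(3) FK[OF that]] Fa[OF that] by auto
  have Baa: "B a a = l0" using BHa[OF K(3)] by simp
  have "\<forall>i\<in>K. \<forall>j\<in>K. A i j = (\<Sum>m\<in>K. l m * U i m * U j m)"
  proof (intro ballI)
    fix i j assume ij: "i \<in> K" "j \<in> K"
    have "A i j = (\<Sum>k\<in>K. H i k * (\<Sum>q\<in>K. B k q * H q j))"
      using AB[OF ij] by (simp add: mm_def)
    also have "\<dots> = H i a * (l0 * H a j) + (\<Sum>k\<in>F. H i k * (\<Sum>q\<in>F. B k q * H q j))"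
      unfolding sumK using Baq Baa by simp
    also have "\<dots> = l0 * v i * v j + (\<Sum>k\<in>F. \<Sum>q\<in>F. H i k * (\<Sum>m\<in>F. l' m * U' k m * U' q m) * H q j)"
    proof -
      have hi: "H i a = v i" using Ha ij by simp
      have hj: "H a j = v j" using Ha Hs ij K(3) by auto
      show ?thesis using U'd unfolding hi hj by (simp add: sum_distrib_left sum_distrib_right mult_ac)
    qed
    also have "\<dots> = l0 * v i * v j + (\<Sum>m\<in>F. l' m * (\<Sum>k\<in>F. H i k * U' k m) * (\<Sum>q\<in>F. U' q m * H q j))"
      by (simp only: triple_sum)
    also have "\<dots> = (\<Sum>m\<in>K. l m * U i m * U j m)"
      unfolding sumK U_def l_def using Fa Hs ij FK
      by (auto intro!: sum.cong simp: mult_ac)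
    finally show "A i j = (\<Sum>m\<in>K. l m * U i m * U j m)" .
  qed
  moreover have "\<forall>i\<in>K. \<forall>j\<in>K. (\<Sum>m\<in>K. U i m * U j m) = (if i = j then 1 else 0)"
  proof (intro ballI)
    fix i j assume ij: "i \<in> K" "j \<in> K"
    have "(\<Sum>m\<in>K. U i m * U j m) = v i * v j + (\<Sum>m\<in>F. (\<Sum>k\<in>F. H i k * U' k m) * (\<Sum>q\<in>F. H j q * U' q m))"
      unfolding sumK U_def using Fa by simp
    also have "\<dots> = v i * v j + (\<Sum>k\<in>F. \<Sum>q\<in>F. H i k * H j q * (if k = q then 1 else 0))"
      unfolding prod_sums using U'r by simp
    also have "\<dots> = v i * v j + (\<Sum>k\<in>F. H i k * H j k)"
    proof -
      have "(\<Sum>q\<in>F. H i k * H j q * (if k = q then 1 else 0)) = H i k * H j k" if "k \<in> F" for k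
        by (rule delta_right[OF aF(2) that])
      thus ?thesis by simp
    qed
    also have "\<dots> = (\<Sum>k\<in>K. H i k * H k j)"
    proof -
      have hi: "H i a = v i" using Ha ij by simp
      have hj: "H a j = v j" using Ha Hs ij K(3) by auto
      show ?thesis unfolding sumK hi hj using Hs ij FK by (auto intro!: sum.cong)
    qed
    also have "\<dots> = (if i = j then 1 else 0)" using HH ij by simp
    finally show "(\<Sum>m\<in>K. U i m * U j m) = (if i = j then 1 else 0)" .
  qed
  moreover have "\<forall>m\<in>K. \<forall>m'\<in>K. (\<Sum>i\<in>K. U i m * U i m') = (if m = m' then 1 else 0)"
  proof -
    have HvF: "(\<Sum>i\<in>K. v i * H i k) = 0" if k: "k \<in> F" for k
    proof -
      have "(\<Sum>i\<in>K. v i * H i k) = (\<Sum>i\<in>K. H a i * H i k)"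
        using Ha Hs K(3) by (auto intro!: sum.cong)
      also have "\<dots> = 0" using HH K(3) FK[OF k] Fa[OF k] by auto
      finally show ?thesis .
    qed
    have c1: "(\<Sum>i\<in>K. v i * (\<Sum>k\<in>F. H i k * U' k m)) = 0" for m
    proof -
      have "(\<Sum>i\<in>K. v i * (\<Sum>k\<in>F. H i k * U' k m)) = (\<Sum>k\<in>F. (\<Sum>i\<in>K. v i * H i k) * U' k m)"
        by (simp add: sum_distrib_left sum_distrib_right mult_ac sum.swap[of _ F])
      also have "\<dots> = 0" using HvF by simp
      finally show ?thesis .
    qed
    have c2: "(\<Sum>i\<in>K. (\<Sum>k\<in>F. H i k * U' k m) * (\<Sum>q\<in>F. H i q * U' q m')) = (if m = m' then 1 else 0)"
      if "m \<in> F" "m' \<in> F" for m m'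
    proof -
      have "(\<Sum>i\<in>K. (\<Sum>k\<in>F. H i k * U' k m) * (\<Sum>q\<in>F. H i q * U' q m'))
          = (\<Sum>i\<in>K. (\<Sum>k\<in>F. U' k m * H k i) * (\<Sum>q\<in>F. U' q m' * H q i))"
        using Hs FK by (auto intro!: sum.cong simp: mult.commute)
      also have "\<dots> = (\<Sum>k\<in>F. \<Sum>q\<in>F. U' k m * U' q m' * (\<Sum>i\<in>K. H k i * H q i))"
        by (rule prod_sums)
      also have "\<dots> = (\<Sum>k\<in>F. \<Sum>q\<in>F. U' k m * U' q m' * (if k = q then 1 else 0))"
      proof (intro sum.cong refl)
        fix k q assume "k \<in> F" "q \<in> F"
        hence "(\<Sum>i\<in>K. H k i * H q i) = (\<Sum>i\<in>K. H k i * H i q)" using Hs FK by (auto intro!: sum.cong)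
        thus "U' k m * U' q m' * (\<Sum>i\<in>K. H k i * H q i) = U' k m * U' q m' * (if k = q then 1 else 0)"
          using HH FK \<open>k \<in> F\<close> \<open>q \<in> F\<close> by simp
      qed
      also have "\<dots> = (\<Sum>k\<in>F. U' k m * U' k m')"
      proof -
        have "(\<Sum>q\<in>F. U' k m * U' q m' * (if k = q then 1 else 0)) = U' k m * U' k m'" if "k \<in> F" for k
          by (rule delta_right[OF aF(2) that])
        thus ?thesis by simp
      qed
      also have "\<dots> = (if m = m' then 1 else 0)" using U'c that by simp
      finally show ?thesis .
    qed
    show ?thesis
    proof (intro ballI)
      fix m m' assume mm: "m \<in> K" "m' \<in> K"
      show "(\<Sum>i\<in>K. U i m * U i m') = (if m = m' then 1 else 0)"
      proof (cases "m = a")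
        case True
        show ?thesis
        proof (cases "m' = a")
          case True
          thus ?thesis using \<open>m = a\<close> v1 by (simp add: U_def)
        next
          case False
          hence "m' \<in> F" using mm K_def by auto
          thus ?thesis using \<open>m = a\<close> False c1 by (simp add: U_def)
        qed
      next
        case False
        hence mF: "m \<in> F" using mm K_def by auto
        show ?thesis
        proof (cases "m' = a")
          case True
          have "(\<Sum>i\<in>K. U i m * U i m') = (\<Sum>i\<in>K. v i * (\<Sum>k\<in>F. H i k * U' k m))"
            using True False by (simp add: U_def mult.commute)
          thus ?thesis using c1 True False by simp
        next
          case False
          hence "m' \<in> F" using mm K_def by auto
          thus ?thesis using c2[OF mF] False \<open>m \<noteq> a\<close> by (simp add: U_def)
        qed
      qed
    qed
  qed
  ultimately show ?case unfolding K_def by blast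
qed




lemma exists_low_set:
  fixes lam :: "'a \<Rightarrow> real"
  assumes K: "finite K" and p: "p \<le> card K"
  shows "\<exists>S\<subseteq>K. card S = p \<and> (\<forall>i\<in>S. \<forall>j\<in>K-S. lam i \<le> lam j)"
  using p
proof (induction p)
  case 0 thus ?case by (intro exI[of _ "{}"]) simp
next
  case (Suc p)
  then obtain S where S: "S \<subseteq> K" "card S = p" "\<forall>i\<in>S. \<forall>j\<in>K-S. lam i \<le> lam j" by auto
  have "K - S \<noteq> {}"
  proof
    assume "K - S = {}" hence "K \<subseteq> S" by auto
    hence "card K \<le> card S" using card_mono[OF finite_subset[OF S(1) K]] by simp
    thus False using Suc.prems S(2) by simp
  qed
  moreover have "finite (K - S)" using K by simp
  ultimately have "Min (lam ` (K-S)) \<in> lam ` (K-S)" by (intro Min_in) auto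
  then obtain j where j0: "j \<in> K - S" "lam j = Min (lam ` (K-S))" by auto
  have j: "j \<in> K - S" "\<forall>j'\<in>K-S. lam j \<le> lam j'"
    using j0 \<open>finite (K - S)\<close> by auto
  have fS: "finite S" using finite_subset[OF S(1) K] .
  show ?case
  proof (intro exI[of _ "insert j S"] conjI)
    show "insert j S \<subseteq> K" using S j by auto
    show "card (insert j S) = Suc p" using j fS S by simp
    show "\<forall>i\<in>insert j S. \<forall>k\<in>K - insert j S. lam i \<le> lam k" using S j by auto
  qed
qed

lemma lp_ineq:
  fixes lam w :: "'a \<Rightarrow> real"
  assumes K: "finite K" and p: "p \<le> card K"
    and subs: "\<And>S. S \<subseteq> K \<Longrightarrow> card S = p \<Longrightarrow> 0 \<le> (\<Sum>i\<in>S. lam i)"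
    and w: "\<And>i. i \<in> K \<Longrightarrow> 0 \<le> w i \<and> w i \<le> c" and c: "0 \<le> c"
    and sw: "(\<Sum>i\<in>K. w i) = real p * c"
  shows "0 \<le> (\<Sum>i\<in>K. lam i * w i)"
proof -
  obtain S where S: "S \<subseteq> K" "card S = p" "\<forall>i\<in>S. \<forall>j\<in>K-S. lam i \<le> lam j"
    using exists_low_set[OF K p] by blast
  have fS: "finite S" using finite_subset[OF S(1) K] .
  obtain m where m1: "\<forall>i\<in>S. lam i \<le> m" and m2: "\<forall>j\<in>K-S. m \<le> lam j"
  proof (cases "S = {}")
    case False
    show ?thesis
    proof (rule that[of "Max (lam ` S)"])
      show "\<forall>i\<in>S. lam i \<le> Max (lam ` S)" using fS by simp
      show "\<forall>j\<in>K-S. Max (lam ` S) \<le> lam j" using fS False S(3) by (simp add: Max_le_iff)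
    qed
  next
    case True
    show ?thesis
    proof (cases "K = {}")
      case True thus ?thesis using that[of 0] \<open>S = {}\<close> by simp
    next
      case False
      show ?thesis by (rule that[of "Min (lam ` K)"]) (use K False True in auto)
    qed
  qed
  have split: "(\<Sum>i\<in>K. f i) = (\<Sum>i\<in>S. f i) + (\<Sum>i\<in>K-S. f i)" for f :: "'a \<Rightarrow> real"
    using sum.subset_diff[OF S(1) K, of f] by simp
  have "(\<Sum>i\<in>K. lam i * w i) - c * (\<Sum>i\<in>S. lam i)
        = (\<Sum>i\<in>S. lam i * (w i - c)) + (\<Sum>i\<in>K-S. lam i * w i)"
    unfolding split by (simp add: sum_distrib_left algebra_simps sum_subtractf)
  also have "\<dots> \<ge> (\<Sum>i\<in>S. m * (w i - c)) + (\<Sum>i\<in>K-S. m * w i)"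
  proof (rule add_mono; rule sum_mono)
    fix i assume "i \<in> S"
    thus "m * (w i - c) \<le> lam i * (w i - c)" using m1 w S(1)
      by (intro mult_right_mono_neg) auto
  next
    fix i assume "i \<in> K - S"
    thus "m * w i \<le> lam i * w i" using m2 w by (intro mult_right_mono) auto
  qed
  also have "(\<Sum>i\<in>S. m * (w i - c)) + (\<Sum>i\<in>K-S. m * w i) = m * ((\<Sum>i\<in>K. w i) - real p * c)"
    unfolding split using S(2) by (simp add: sum_distrib_left[symmetric] sum_subtractf algebra_simps)
  also have "\<dots> = 0" using sw by simp
  finally have "c * (\<Sum>i\<in>S. lam i) \<le> (\<Sum>i\<in>K. lam i * w i)" by simp
  moreover have "0 \<le> c * (\<Sum>i\<in>S. lam i)" using c subs[OF S(1,2)] by simp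
  ultimately show ?thesis by linarith
qed

lemma proots_lin: "proots (\<Prod>a\<leftarrow>xs. [:- a, 1:]) = mset (xs :: real list)"
proof (induction xs)
  case (Cons x xs)
  have nz: "(\<Prod>a\<leftarrow>xs. [:- a, 1:]) \<noteq> 0" by (auto simp: prod_list_zero_iff)
  have "proots (\<Prod>a\<leftarrow>x # xs. [:- a, 1:]) = proots [:- x, 1:] + proots (\<Prod>a\<leftarrow>xs. [:- a, 1:])"
    by (simp only: prod_list.Cons list.map, rule proots_mult) (use nz in auto)
  thus ?case using Cons by simp
qed simp

lemma eigvals_spec:
  fixes A U :: "nat \<Rightarrow> nat \<Rightarrow> real" and l :: "nat \<Rightarrow> real"
  assumes Uc: "\<forall>m\<in>{..<n}. \<forall>m'\<in>{..<n}. (\<Sum>i\<in>{..<n}. U i m * U i m') = (if m = m' then 1 else 0)"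
    and Ur: "\<forall>i\<in>{..<n}. \<forall>j\<in>{..<n}. (\<Sum>m\<in>{..<n}. U i m * U j m) = (if i = j then 1 else 0)"
    and Ad: "\<forall>i\<in>{..<n}. \<forall>j\<in>{..<n}. A i j = (\<Sum>m\<in>{..<n}. l m * U i m * U j m)"
  shows "eigvals n A = image_mset l (mset_set {..<n})"
proof -
  define Q where "Q = qf_mat n A"
  define P where "P = mat n n (\<lambda>(i,j). U i j)"
  define P' where "P' = mat n n (\<lambda>(i,j). U j i)"
  define D where "D = mat n n (\<lambda>(i,j). if i = j then l i else 0)"
  have car: "Q \<in> carrier_mat n n" "P \<in> carrier_mat n n" "P' \<in> carrier_mat n n" "D \<in> carrier_mat n n"
    unfolding Q_def qf_mat_def P_def P'_def D_def by auto
  have PP': "P * P' = 1\<^sub>m n"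
    by (rule eq_matI) (use Ur in \<open>auto simp: P_def P'_def scalar_prod_def row_def col_def lessThan_atLeast0\<close>)
  have P'P: "P' * P = 1\<^sub>m n"
    by (rule eq_matI) (use Uc in \<open>auto simp: P_def P'_def scalar_prod_def row_def col_def lessThan_atLeast0\<close>)
  have PD: "P * D = mat n n (\<lambda>(i,j). U i j * l j)"
  proof (rule eq_matI)
    fix i j assume ij: "i < dim_row (mat n n (\<lambda>(i,j). U i j * l j))" "j < dim_col (mat n n (\<lambda>(i,j). U i j * l j))"
    have "(\<Sum>k = 0..<n. U i k * (if k = j then l k else 0)) = U i j * l j"
      using ij by (simp add: if_distrib[where f="\<lambda>x. _ * x"] sum.delta' cong: if_cong)
    thus "(P * D) $$ (i, j) = mat n n (\<lambda>(i,j). U i j * l j) $$ (i, j)"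
      using ij by (simp add: P_def D_def scalar_prod_def row_def col_def)
  qed (auto simp: P_def D_def)
  have QPDP: "Q = P * D * P'"
    unfolding PD
    by (rule eq_matI) (use Ad in \<open>auto simp: Q_def qf_mat_def P'_def scalar_prod_def row_def col_def lessThan_atLeast0 mult_ac\<close>)
  have "similar_mat Q D" unfolding similar_mat_def similar_mat_wit_def
    by (rule exI[of _ P], rule exI[of _ P']) (use car PP' P'P QPDP in \<open>auto simp: Q_def qf_mat_def\<close>)
  hence "char_poly Q = char_poly D" by (rule char_poly_similar)
  also have "\<dots> = (\<Prod>a\<leftarrow>diag_mat D. [:- a, 1:])"
    by (rule char_poly_upper_triangular[OF car(4)]) (auto simp: upper_triangular_def D_def)
  also have "diag_mat D = map l [0..<n]" by (simp add: diag_mat_def D_def)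
  finally have cp: "char_poly Q = (\<Prod>a\<leftarrow>map l [0..<n]. [:- a, 1:])" .
  have "eigvals n A = proots (\<Prod>a\<leftarrow>map l [0..<n]. [:- a, 1:])"
    unfolding eigvals_def cp[unfolded Q_def] ..
  also have "\<dots> = mset (map l [0..<n])"
    by (rule proots_lin)
  also have "\<dots> = image_mset l (mset_set {..<n})"
    by (simp add: mset_map mset_upt lessThan_atLeast0)
  finally show ?thesis .
qed


lemma trace_ineq:
  fixes \<theta> :: "nat \<Rightarrow> nat \<Rightarrow> real" and \<tau> :: "nat \<Rightarrow> real" and G :: "nat \<Rightarrow> nat \<Rightarrow> real"
  assumes p: "p \<le> n"
    and sym: "\<And>i j. i < n \<Longrightarrow> j < n \<Longrightarrow> \<theta> i j = \<theta> j i"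
    and psd: "p_pos_semidef n p (\<lambda>i j. \<theta> i j - \<tau> i * \<tau> j)"
    and G1: "\<And>x. 0 \<le> (\<Sum>j<n. \<Sum>k<n. x j * x k * G j k)"
    and G2: "\<And>x. (\<Sum>j<n. \<Sum>k<n. x j * x k * G j k) \<le> c * (\<Sum>j<n. x j * x j)"
    and G3: "(\<Sum>j<n. G j j) = real p * c" and c: "0 \<le> c"
  shows "0 \<le> (\<Sum>j<n. \<Sum>k<n. (\<theta> j k - \<tau> j * \<tau> k) * G j k)"
proof -
  define A where "A i j = \<theta> i j - \<tau> i * \<tau> j" for i j
  have "\<exists>U l. (\<forall>m\<in>{..<n}. \<forall>m'\<in>{..<n}. (\<Sum>i\<in>{..<n}. U i m * U i m') = (if m = m' then 1 else 0))
          \<and> (\<forall>i\<in>{..<n}. \<forall>j\<in>{..<n}. (\<Sum>m\<in>{..<n}. U i m * U j m) = (if i = j then 1 else 0))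
          \<and> (\<forall>i\<in>{..<n}. \<forall>j\<in>{..<n}. A i j = (\<Sum>m\<in>{..<n}. l m * U i m * U j m))"
    by (rule spectral) (auto simp: A_def sym)
  then obtain U l where Uc: "\<forall>m\<in>{..<n}. \<forall>m'\<in>{..<n}. (\<Sum>i\<in>{..<n}. U i m * U i m') = (if m = m' then 1 else 0)"
    and Ur: "\<forall>i\<in>{..<n}. \<forall>j\<in>{..<n}. (\<Sum>m\<in>{..<n}. U i m * U j m) = (if i = j then 1 else 0)"
    and Ad: "\<forall>i\<in>{..<n}. \<forall>j\<in>{..<n}. A i j = (\<Sum>m\<in>{..<n}. l m * U i m * U j m)" by blast
  have ev: "eigvals n A = image_mset l (mset_set {..<n})" by (rule eigvals_spec[OF Uc Ur Ad])
  have subs: "0 \<le> (\<Sum>i\<in>S. l i)" if S: "S \<subseteq> {..<n}" "card S = p" for S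
  proof -
    have "image_mset l (mset_set S) \<subseteq># eigvals n A"
      unfolding ev by (rule image_mset_subseteq_mono, rule subset_imp_msubset_mset_set) (use S in auto)
    moreover have "size (image_mset l (mset_set S)) = p" using S by simp
    ultimately have "0 \<le> sum_mset (image_mset l (mset_set S))"
      using psd unfolding p_pos_semidef_def A_def by blast
    thus ?thesis by (simp add: sum_unfold_sum_mset)
  qed
  define w where "w m = (\<Sum>j<n. \<Sum>k<n. U j m * U k m * G j k)" for m
  have w: "0 \<le> w m \<and> w m \<le> c" if "m \<in> {..<n}" for m
  proof
    show "0 \<le> w m" unfolding w_def using G1[of "\<lambda>j. U j m"] .
    have "w m \<le> c * (\<Sum>j<n. U j m * U j m)" unfolding w_def using G2[of "\<lambda>j. U j m"] .
    also have "\<dots> = c" using Uc that by simp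
    finally show "w m \<le> c" .
  qed
  have "(\<Sum>m<n. w m) = (\<Sum>j<n. \<Sum>k<n. (\<Sum>m<n. U j m * U k m) * G j k)"
    unfolding w_def sum_distrib_right
    by (subst sum.swap, rule sum.cong[OF refl], subst sum.swap, simp)
  also have "\<dots> = (\<Sum>j<n. \<Sum>k<n. (if j = k then 1 else 0) * G j k)"
    using Ur by simp
  also have "\<dots> = (\<Sum>j<n. G j j)"
    by (simp add: if_distrib[where f="\<lambda>x. x * _"] sum.delta cong: if_cong)
  finally have sw: "(\<Sum>m<n. w m) = real p * c" using G3 by simp
  have "0 \<le> (\<Sum>m\<in>{..<n}. l m * w m)"
    by (rule lp_ineq[where c=c]) (use p subs w c sw in auto)
  also have "(\<Sum>m\<in>{..<n}. l m * w m) = (\<Sum>j<n. \<Sum>k<n. (\<Sum>m<n. l m * U j m * U k m) * G j k)"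
    unfolding w_def sum_distrib_left sum_distrib_right
    by (subst sum.swap, rule sum.cong[OF refl], subst sum.swap, simp add: mult_ac)
  also have "\<dots> = (\<Sum>j<n. \<Sum>k<n. A j k * G j k)" using Ad by simp
  finally show ?thesis unfolding A_def .
qed




lemma finite_idx[simp]: "finite (idx n p)"
  unfolding idx_def by (rule finite_subset[of _ "Pow {..<n}"]) auto

lemma forms_out: "f \<in> forms n p \<Longrightarrow> I \<notin> idx n p \<Longrightarrow> f I = 0"
  unfolding forms_def idx_def by auto

lemma sgn_sq[simp]: "sgn_pos k B * sgn_pos k B = 1"
  unfolding sgn_pos_def by (simp add: power_mult_distrib[symmetric])

lemma sgn_sq2: "sgn_pos k B * a * (sgn_pos k B * b) = (a * b :: real)"
proof -
  have "sgn_pos k B * a * (sgn_pos k B * b) = (sgn_pos k B * sgn_pos k B) * (a * b)" by (simp only: mult_ac)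
  thus ?thesis by simp
qed

lemma sgn_insert:
  assumes "a \<notin> B"
  shows "sgn_pos k (insert a B) = (if a < k then - sgn_pos k B else sgn_pos k B)"
proof -
  have fin: "finite {i \<in> B. i < k}" by (rule finite_subset[of _ "{..<k}"]) auto
  show ?thesis
  proof (cases "a < k")
    case True
    hence "{i \<in> insert a B. i < k} = insert a {i \<in> B. i < k}" by auto
    hence "card {i \<in> insert a B. i < k} = Suc (card {i \<in> B. i < k})" using fin assms by simp
    thus ?thesis using True unfolding sgn_pos_def by simp
  next
    case False
    hence "{i \<in> insert a B. i < k} = {i \<in> B. i < k}" by auto
    thus ?thesis using False unfolding sgn_pos_def by simp
  qed
qed

lemma sum_insert_bij:
  fixes h :: "nat set \<Rightarrow> nat \<Rightarrow> real"
  assumes p: "1 \<le> p"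
  shows "(\<Sum>J\<in>idx n p. \<Sum>k\<in>J. h (J - {k}) k) = (\<Sum>I\<in>idx n (p - 1). \<Sum>j\<in>{..<n} - I. h I j)"
proof -
  define L where "L = Sigma (idx n p) (\<lambda>J. J)"
  define R where "R = Sigma (idx n (p - 1)) (\<lambda>I. {..<n} - I)"
  define \<phi> where "\<phi> = (\<lambda>(I, j). (insert j I, j :: nat))"
  have finJ: "finite J" if "J \<in> idx n q" for J q
    using that unfolding idx_def by (auto intro: finite_subset)
  have bij: "bij_betw \<phi> R L"
  proof (rule bij_betw_byWitness[where f' = "\<lambda>(J, k). (J - {k}, k)"])
    show "\<forall>a\<in>R. (\<lambda>(J, k). (J - {k}, k)) (\<phi> a) = a" unfolding R_def \<phi>_def by auto
    show "\<forall>a\<in>L. \<phi> ((\<lambda>(J, k). (J - {k}, k)) a) = a" unfolding L_def \<phi>_def by (auto simp: insert_absorb)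
    show "\<phi> ` R \<subseteq> L"
    proof
      fix y assume "y \<in> \<phi> ` R"
      then obtain I j where Ij: "I \<in> idx n (p - 1)" "j \<in> {..<n} - I" "y = (insert j I, j)"
        unfolding R_def \<phi>_def by auto
      have "card (insert j I) = p" using Ij(1,2) finJ[OF Ij(1)] p unfolding idx_def by auto
      thus "y \<in> L" using Ij unfolding L_def idx_def by auto
    qed
    show "(\<lambda>(J, k). (J - {k}, k)) ` L \<subseteq> R"
    proof
      fix y assume "y \<in> (\<lambda>(J, k). (J - {k}, k)) ` L"
      then obtain J k where Jk: "J \<in> idx n p" "k \<in> J" "y = (J - {k}, k)"
        unfolding L_def by auto
      have "card (J - {k}) = p - 1" using Jk finJ[OF Jk(1)] unfolding idx_def by auto
      thus "y \<in> R" using Jk unfolding R_def idx_def by auto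
    qed
  qed
  have "(\<Sum>J\<in>idx n p. \<Sum>k\<in>J. h (J - {k}) k) = (\<Sum>(J,k)\<in>L. h (J - {k}) k)"
    unfolding L_def by (rule sum.Sigma) (auto intro: finJ)
  also have "\<dots> = (\<Sum>x\<in>R. (\<lambda>(J,k). h (J - {k}) k) (\<phi> x))"
    by (rule sum.reindex_bij_betw[OF bij, symmetric])
  also have "\<dots> = (\<Sum>(I,j)\<in>R. h I j)"
    by (rule sum.cong) (auto simp: R_def \<phi>_def)
  also have "\<dots> = (\<Sum>I\<in>idx n (p - 1). \<Sum>j\<in>{..<n} - I. h I j)"
    unfolding R_def by (rule sum.Sigma[symmetric]) auto
  finally show ?thesis .
qed


definition iota :: "nat \<Rightarrow> (nat \<Rightarrow> real) \<Rightarrow> form \<Rightarrow> form" where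
  "iota n x g = (\<lambda>I. \<Sum>j<n. x j * interior j g I)"

lemma idx_inter: "J \<in> idx n p \<Longrightarrow> J \<inter> {..<n} = J"
  unfolding idx_def by auto

lemma sum_diff_if: "(\<Sum>j\<in>{..<n::nat} - I. f j) = (\<Sum>j<n. if j \<in> I then 0 else (f j :: real))"
proof -
  have e: "{..<n} - I = {j \<in> {..<n}. j \<notin> I}" by auto
  have "(\<Sum>j\<in>{..<n} - I. f j) = (\<Sum>j<n. if j \<notin> I then f j else 0)"
    unfolding e by (rule sum.inter_filter[where g=f and P="\<lambda>j. j \<notin> I"]) simp
  also have "\<dots> = (\<Sum>j<n. if j \<in> I then 0 else (f j :: real))" by (rule sum.cong) auto
  finally show ?thesis .
qed

lemma adjoint:
  assumes p: "1 \<le> p"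
  shows "form_inner n p (wedge1 n x \<xi>) g = form_inner n (p - 1) \<xi> (iota n x g)"
proof -
  define h where "h I k = x k * sgn_pos k I * \<xi> I * g (insert k I)" for I k
  have "form_inner n p (wedge1 n x \<xi>) g = (\<Sum>J\<in>idx n p. \<Sum>k\<in>J. h (J - {k}) k)"
    unfolding form_inner_def wedge1_def
  proof (rule sum.cong[OF refl])
    fix J assume J: "J \<in> idx n p"
    show "(\<Sum>k\<in>J \<inter> {..<n}. x k * sgn_pos k (J - {k}) * \<xi> (J - {k})) * g J = (\<Sum>k\<in>J. h (J - {k}) k)"
      unfolding idx_inter[OF J] sum_distrib_right h_def by (rule sum.cong) (auto simp: insert_absorb)
  qed
  also have "\<dots> = (\<Sum>I\<in>idx n (p - 1). \<Sum>j\<in>{..<n} - I. h I j)" by (rule sum_insert_bij[OF p])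
  also have "\<dots> = form_inner n (p - 1) \<xi> (iota n x g)"
    unfolding form_inner_def iota_def
  proof (rule sum.cong[OF refl])
    fix I
    show "(\<Sum>j\<in>{..<n} - I. h I j) = \<xi> I * (\<Sum>j<n. x j * interior j g I)"
      unfolding sum_diff_if sum_distrib_left interior_def h_def by (rule sum.cong) auto
  qed
  finally show ?thesis .
qed

lemma interior_forms:
  assumes "g \<in> forms n p" "1 \<le> p"
  shows "interior j g \<in> forms n (p - 1)"
  unfolding forms_def
proof (intro CollectI allI impI)
  fix I assume "interior j g I \<noteq> 0"
  hence jI: "j \<notin> I" and g: "g (insert j I) \<noteq> 0" unfolding interior_def by (auto split: if_splits)
  hence "insert j I \<subseteq> {..<n}" "card (insert j I) = p" using assms(1) unfolding forms_def by auto
  moreover have "finite I" using \<open>insert j I \<subseteq> {..<n}\<close> by (auto intro: finite_subset)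
  ultimately show "I \<subseteq> {..<n} \<and> card I = p - 1" using jI by auto
qed

lemma wedge1_forms:
  assumes "\<xi> \<in> forms n (p - 1)" "1 \<le> p"
  shows "wedge1 n x \<xi> \<in> forms n p"
  unfolding forms_def
proof (intro CollectI allI impI)
  fix J assume "wedge1 n x \<xi> J \<noteq> 0"
  then obtain k where k: "k \<in> J" "k < n" and xi: "\<xi> (J - {k}) \<noteq> 0"
    unfolding wedge1_def by (metis (no_types, lifting) IntE lessThan_iff mult_zero_right sum.neutral)
  hence "J - {k} \<subseteq> {..<n}" "card (J - {k}) = p - 1" using assms(1) unfolding forms_def by auto
  moreover have "finite J"
  proof -
    have "finite (J - {k})" using finite_subset[OF \<open>J - {k} \<subseteq> {..<n}\<close> finite_lessThan] .
    thus ?thesis by simp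
  qed
  moreover have "card J \<ge> 1" using k \<open>finite J\<close> by (auto simp: Suc_le_eq card_gt_0_iff)
  ultimately show "J \<subseteq> {..<n} \<and> card J = p" using k assms(2) by auto
qed

lemma iota_forms:
  assumes "g \<in> forms n p" "1 \<le> p"
  shows "iota n x g \<in> forms n (p - 1)"
  unfolding forms_def
proof (intro CollectI allI impI)
  fix I assume "iota n x g I \<noteq> 0"
  then obtain j where "x j * interior j g I \<noteq> 0" unfolding iota_def
    using sum.not_neutral_contains_not_neutral by blast
  hence "interior j g I \<noteq> 0" by auto
  thus "I \<subseteq> {..<n} \<and> card I = p - 1" using interior_forms[OF assms, of j] unfolding forms_def by blast
qed


lemma F_formula:
  assumes p: "1 \<le> p"
  shows "form_inner n p (F_op n \<theta> g) h
       = (\<Sum>j<n. \<Sum>k<n. \<theta> j k * form_inner n (p - 1) (interior j g) (interior k h))"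
proof -
  have "form_inner n p (F_op n \<theta> g) h = (\<Sum>j<n. form_inner n p (wedge1 n (\<lambda>k. \<theta> j k) (interior j g)) h)"
    unfolding form_inner_def F_op_def sum_distrib_right by (rule sum.swap)
  also have "\<dots> = (\<Sum>j<n. form_inner n (p - 1) (interior j g) (iota n (\<lambda>k. \<theta> j k) h))"
    using adjoint[OF p] by simp
  also have "\<dots> = (\<Sum>j<n. \<Sum>k<n. \<theta> j k * form_inner n (p - 1) (interior j g) (interior k h))"
    unfolding form_inner_def iota_def sum_distrib_left
    by (rule sum.cong[OF refl], subst sum.swap) (simp add: mult_ac)
  finally show ?thesis .
qed

lemma F_forms:
  assumes "g \<in> forms n p" "1 \<le> p"
  shows "F_op n \<theta> g \<in> forms n p"
  unfolding forms_def
proof (intro CollectI allI impI)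
  fix J assume "F_op n \<theta> g J \<noteq> 0"
  then obtain j where "wedge1 n (\<lambda>k. \<theta> j k) (interior j g) J \<noteq> 0" unfolding F_op_def
    using sum.not_neutral_contains_not_neutral by blast
  thus "J \<subseteq> {..<n} \<and> card J = p"
    using wedge1_forms[OF interior_forms[OF assms] assms(2), of "\<lambda>k. \<theta> j k"] unfolding forms_def by blast
qed

lemma trace_G:
  assumes p: "1 \<le> p"
  shows "(\<Sum>j<n. form_inner n (p - 1) (interior j g) (interior j g)) = real p * form_inner n p g g"
proof -
  have "(\<Sum>j<n. form_inner n (p - 1) (interior j g) (interior j g))
      = (\<Sum>I\<in>idx n (p - 1). \<Sum>j\<in>{..<n} - I. g (insert j I) * g (insert j I))"
    unfolding form_inner_def
    by (subst sum.swap, rule sum.cong[OF refl]) (simp add: sum_diff_if interior_def sgn_sq2 if_distrib[where f="\<lambda>x. x * _"] cong: if_cong)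
  also have "\<dots> = (\<Sum>J\<in>idx n p. \<Sum>k\<in>J. g (insert k (J - {k})) * g (insert k (J - {k})))"
    by (rule sum_insert_bij[OF p, symmetric])
  also have "\<dots> = (\<Sum>J\<in>idx n p. real p * (g J * g J))"
  proof (rule sum.cong[OF refl])
    fix J assume J: "J \<in> idx n p"
    have "(\<Sum>k\<in>J. g (insert k (J - {k})) * g (insert k (J - {k}))) = (\<Sum>k\<in>J. g J * g J)"
      by (rule sum.cong) (auto simp: insert_absorb)
    also have "\<dots> = real p * (g J * g J)" using J unfolding idx_def by simp
    finally show "(\<Sum>k\<in>J. g (insert k (J - {k})) * g (insert k (J - {k}))) = real p * (g J * g J)" .
  qed
  also have "\<dots> = real p * form_inner n p g g" unfolding form_inner_def by (simp add: sum_distrib_left)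
  finally show ?thesis .
qed

lemma quad_G:
  "(\<Sum>j<n. \<Sum>k<n. x j * x k * form_inner n q (interior j g) (interior k g))
   = form_inner n q (iota n x g) (iota n x g)"
proof -
  have "form_inner n q (iota n x g) (iota n x g) = (\<Sum>I\<in>idx n q. \<Sum>j<n. \<Sum>k<n. x j * x k * (interior j g I * interior k g I))"
    unfolding form_inner_def iota_def sum_product by (simp add: mult_ac)
  also have "\<dots> = (\<Sum>j<n. \<Sum>I\<in>idx n q. \<Sum>k<n. x j * x k * (interior j g I * interior k g I))"
    by (rule sum.swap)
  also have "\<dots> = (\<Sum>j<n. \<Sum>k<n. \<Sum>I\<in>idx n q. x j * x k * (interior j g I * interior k g I))"
    by (rule sum.cong[OF refl], rule sum.swap)
  also have "\<dots> = (\<Sum>j<n. \<Sum>k<n. x j * x k * form_inner n q (interior j g) (interior k g))"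
    unfolding form_inner_def sum_distrib_left ..
  finally show ?thesis ..
qed


lemma anti_pt:
  fixes g :: form
  shows "(if j \<in> I then 0 else sgn_pos j I * (if k \<in> insert j I then sgn_pos k (insert j I - {k}) * g (insert j I - {k}) else 0))
       + (if k \<in> I then sgn_pos k (I - {k}) * (if j \<in> I - {k} then 0 else sgn_pos j (I - {k}) * g (insert j (I - {k}))) else 0)
       = (if j = k then g I else 0)"
proof (cases "j = k")
  case True
  show ?thesis
  proof (cases "j \<in> I")
    case True
    thus ?thesis using \<open>j = k\<close> by (simp add: insert_absorb mult.assoc[symmetric])
  next
    case False
    have "insert j I - {j} = I" using False by auto
    thus ?thesis using \<open>j = k\<close> False by (simp add: mult.assoc[symmetric])
  qed
next
  case False
  show ?thesis
  proof (cases "k \<in> I \<and> j \<notin> I")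
    case True
    define B where "B = I - {k}"
    have I: "I = insert k B" and kB: "k \<notin> B" and jB: "j \<notin> B" using True unfolding B_def by auto
    have e: "insert j I - {k} = insert j B" using False kB unfolding I by auto
    have s1: "sgn_pos j I = (if k < j then - sgn_pos j B else sgn_pos j B)" unfolding I by (rule sgn_insert[OF kB])
    have s2: "sgn_pos k (insert j B) = (if j < k then - sgn_pos k B else sgn_pos k B)" by (rule sgn_insert[OF jB])
    have T1: "(if j \<in> I then 0 else sgn_pos j I * (if k \<in> insert j I then sgn_pos k (insert j I - {k}) * g (insert j I - {k}) else 0))
       = sgn_pos j I * (sgn_pos k (insert j B) * g (insert j B))" using True e by simp
    have T2: "(if k \<in> I then sgn_pos k (I - {k}) * (if j \<in> I - {k} then 0 else sgn_pos j (I - {k}) * g (insert j (I - {k}))) else 0)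
       = sgn_pos k B * (sgn_pos j B * g (insert j B))" using True jB unfolding B_def by simp
    show ?thesis
      apply (subst T1, subst T2)
      apply (unfold s1 s2)
      using \<open>j \<noteq> k\<close> by (cases "j < k") (auto simp: algebra_simps)
  next
    case False
    thus ?thesis using \<open>j \<noteq> k\<close> by auto
  qed
qed

lemma anticomm:
  "iota n x (wedge1 n x g) I + wedge1 n x (iota n x g) I = (\<Sum>j<n. x j * x j) * g I"
proof -
  have inter: "(\<Sum>k\<in>A \<inter> {..<n}. f k) = (\<Sum>k<n. if k \<in> A then f k else (0::real))" for A f
  proof -
    have "A \<inter> {..<n} = {..<n} \<inter> A" by auto
    thus ?thesis by (simp add: sum.inter_restrict)
  qed
  have "iota n x (wedge1 n x g) I = (\<Sum>j<n. \<Sum>k<n. x j * x k *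
      (if j \<in> I then 0 else sgn_pos j I * (if k \<in> insert j I then sgn_pos k (insert j I - {k}) * g (insert j I - {k}) else 0)))"
    unfolding iota_def interior_def wedge1_def inter
    by (rule sum.cong[OF refl]) (auto simp: sum_distrib_left mult_ac intro!: sum.cong)
  moreover have "wedge1 n x (iota n x g) I = (\<Sum>j<n. \<Sum>k<n. x j * x k *
      (if k \<in> I then sgn_pos k (I - {k}) * (if j \<in> I - {k} then 0 else sgn_pos j (I - {k}) * g (insert j (I - {k}))) else 0))"
    unfolding iota_def interior_def wedge1_def inter
    apply (subst sum.swap)
    apply (rule sum.cong[OF refl])
    apply (auto simp: sum_distrib_left mult_ac intro!: sum.cong)
    done
  ultimately have "iota n x (wedge1 n x g) I + wedge1 n x (iota n x g) I
      = (\<Sum>j<n. \<Sum>k<n. x j * x k * (if j = k then g I else 0))"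
    by (simp add: sum.distrib[symmetric] distrib_left[symmetric] anti_pt)
  also have "\<dots> = (\<Sum>j<n. x j * x j) * g I"
    by (simp add: sum_distrib_right if_distrib[where f="\<lambda>y. _ * y"] sum.delta cong: if_cong)
  finally show ?thesis .
qed


lemma form_inner_nonneg: "0 \<le> form_inner n p f f"
  unfolding form_inner_def by (intro sum_nonneg) simp

lemma form_inner_sym: "form_inner n p f g = form_inner n p g f"
  unfolding form_inner_def by (simp add: mult.commute)

lemma iota_bound:
  assumes p: "1 \<le> p"
  shows "form_inner n (p - 1) (iota n x g) (iota n x g) \<le> (\<Sum>j<n. x j * x j) * form_inner n p g g"
proof -
  have a: "form_inner n (p - 1) (iota n x g) (iota n x g) = (\<Sum>I\<in>idx n p. wedge1 n x (iota n x g) I * g I)"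
    using adjoint[OF p, of n x "iota n x g" g] unfolding form_inner_def by simp
  have b: "form_inner n (Suc p) (wedge1 n x g) (wedge1 n x g) = (\<Sum>I\<in>idx n p. iota n x (wedge1 n x g) I * g I)"
    using adjoint[of "Suc p" n x g "wedge1 n x g"] unfolding form_inner_def by (simp add: mult.commute)
  have "form_inner n (p - 1) (iota n x g) (iota n x g) + form_inner n (Suc p) (wedge1 n x g) (wedge1 n x g)
      = (\<Sum>I\<in>idx n p. (iota n x (wedge1 n x g) I + wedge1 n x (iota n x g) I) * g I)"
    unfolding a b by (simp add: sum.distrib[symmetric] algebra_simps)
  also have "\<dots> = (\<Sum>j<n. x j * x j) * form_inner n p g g"
    unfolding anticomm form_inner_def by (simp add: sum_distrib_left mult_ac)
  finally show ?thesis using form_inner_nonneg[of n "Suc p" "wedge1 n x g"] by linarith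
qed


lemma key_ineq:
  fixes \<theta> :: "nat \<Rightarrow> nat \<Rightarrow> real" and \<tau> :: "nat \<Rightarrow> real"
  assumes p1: "1 \<le> p" and pn: "p \<le> n"
    and sym: "\<And>i j. i < n \<Longrightarrow> j < n \<Longrightarrow> \<theta> i j = \<theta> j i"
    and psd: "p_pos_semidef n p (\<lambda>i j. \<theta> i j - \<tau> i * \<tau> j)"
  shows "form_inner n (p - 1) (iota n \<tau> g) (iota n \<tau> g) \<le> form_inner n p (F_op n \<theta> g) g"
proof -
  define G where "G j k = form_inner n (p - 1) (interior j g) (interior k g)" for j k
  have "0 \<le> (\<Sum>j<n. \<Sum>k<n. (\<theta> j k - \<tau> j * \<tau> k) * G j k)"
  proof (rule trace_ineq[OF pn sym psd, where c = "form_inner n p g g"])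
    show "0 \<le> (\<Sum>j<n. \<Sum>k<n. x j * x k * G j k)" for x
      unfolding G_def quad_G by (rule form_inner_nonneg)
    show "(\<Sum>j<n. \<Sum>k<n. x j * x k * G j k) \<le> form_inner n p g g * (\<Sum>j<n. x j * x j)" for x
      unfolding G_def quad_G using iota_bound[OF p1, of n x g] by (simp add: mult.commute)
    show "(\<Sum>j<n. G j j) = real p * form_inner n p g g" unfolding G_def by (rule trace_G[OF p1])
    show "0 \<le> form_inner n p g g" by (rule form_inner_nonneg)
  qed auto
  also have "(\<Sum>j<n. \<Sum>k<n. (\<theta> j k - \<tau> j * \<tau> k) * G j k)
      = (\<Sum>j<n. \<Sum>k<n. \<theta> j k * G j k) - (\<Sum>j<n. \<Sum>k<n. \<tau> j * \<tau> k * G j k)"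
    by (simp add: sum_subtractf left_diff_distrib)
  also have "\<dots> = form_inner n p (F_op n \<theta> g) g - form_inner n (p - 1) (iota n \<tau> g) (iota n \<tau> g)"
    unfolding G_def quad_G F_formula[OF p1] ..
  finally show ?thesis by simp
qed





lemma form_CS: "form_inner n p a b \<le> sqrt (form_inner n p a a) * sqrt (form_inner n p b b)"
proof -
  have "(form_inner n p a b)\<^sup>2 \<le> form_inner n p a a * form_inner n p b b"
    unfolding form_inner_def using Cauchy_Schwarz_ineq_sum[of a b "idx n p"] by (simp add: power2_eq_square)
  hence "sqrt ((form_inner n p a b)\<^sup>2) \<le> sqrt (form_inner n p a a * form_inner n p b b)"
    by (rule real_sqrt_le_mono)
  thus ?thesis by (simp add: real_sqrt_mult)
qed

lemma interior_lin:
  "interior j (\<lambda>P. \<Sum>J\<in>S. c J * b J P) I = (\<Sum>J\<in>S. c J * interior j (b J) I)"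
  unfolding interior_def by (simp add: sum_distrib_left mult_ac)

lemma wedge1_lin:
  "wedge1 n x (\<lambda>P. \<Sum>J\<in>S. c J * b J P) I = (\<Sum>J\<in>S. c J * wedge1 n x (b J) I)"
  unfolding wedge1_def sum_distrib_left by (subst sum.swap) (simp add: mult_ac)

lemma F_lin:
  "F_op n \<theta> (\<lambda>P. \<Sum>J\<in>S. c J * b J P) I = (\<Sum>J\<in>S. c J * F_op n \<theta> (b J) I)"
proof -
  have "F_op n \<theta> (\<lambda>P. \<Sum>J\<in>S. c J * b J P) I = (\<Sum>j<n. wedge1 n (\<lambda>k. \<theta> j k) (\<lambda>Q. \<Sum>J\<in>S. c J * interior j (b J) Q) I)"
    unfolding F_op_def interior_lin by simp
  also have "\<dots> = (\<Sum>j<n. \<Sum>J\<in>S. c J * wedge1 n (\<lambda>k. \<theta> j k) (interior j (b J)) I)"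
    unfolding wedge1_lin ..
  also have "\<dots> = (\<Sum>J\<in>S. c J * F_op n \<theta> (b J) I)"
    unfolding F_op_def sum_distrib_left by (rule sum.swap)
  finally show ?thesis .
qed

definition ebas :: "nat set \<Rightarrow> form" where "ebas J = (\<lambda>I. if I = J then 1 else 0)"

lemma forms_expand:
  assumes "g \<in> forms n p"
  shows "g = (\<lambda>P. \<Sum>J\<in>idx n p. g J * ebas J P)"
proof
  fix P
  show "g P = (\<Sum>J\<in>idx n p. g J * ebas J P)"
  proof (cases "P \<in> idx n p")
    case True thus ?thesis by (simp add: ebas_def if_distrib[where f="\<lambda>x. _ * x"] sum.delta' cong: if_cong)
  next
    case False thus ?thesis using forms_out[OF assms False] by (auto simp: ebas_def intro!: sum.neutral)
  qed
qed

lemma F_expand: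
  assumes "g \<in> forms n p"
  shows "F_op n \<theta> g I = (\<Sum>J\<in>idx n p. g J * F_op n \<theta> (ebas J) I)"
  by (subst forms_expand[OF assms]) (rule F_lin)

lemma inner_ebas: "I \<in> idx n p \<Longrightarrow> form_inner n p f (ebas I) = f I"
  unfolding form_inner_def ebas_def by (simp add: if_distrib[where f="\<lambda>x. _ * x"] sum.delta' cong: if_cong)

lemma M_sym:
  assumes p: "1 \<le> p" and sym: "\<And>i j. i < n \<Longrightarrow> j < n \<Longrightarrow> \<theta> i j = \<theta> j i"
    and I: "I \<in> idx n p" and J: "J \<in> idx n p"
  shows "F_op n \<theta> (ebas J) I = F_op n \<theta> (ebas I) J"
proof -
  have "F_op n \<theta> (ebas J) I = (\<Sum>j<n. \<Sum>k<n. \<theta> j k * form_inner n (p - 1) (interior j (ebas J)) (interior k (ebas I)))"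
    using inner_ebas[OF I] F_formula[OF p, of n \<theta> "ebas J" "ebas I"] by simp
  also have "\<dots> = (\<Sum>k<n. \<Sum>j<n. \<theta> j k * form_inner n (p - 1) (interior j (ebas J)) (interior k (ebas I)))"
    by (rule sum.swap)
  also have "\<dots> = (\<Sum>k<n. \<Sum>j<n. \<theta> k j * form_inner n (p - 1) (interior k (ebas I)) (interior j (ebas J)))"
    by (intro sum.cong refl) (simp add: sym form_inner_sym)
  also have "\<dots> = F_op n \<theta> (ebas I) J"
    using inner_ebas[OF J] F_formula[OF p, of n \<theta> "ebas I" "ebas J"] by simp
  finally show ?thesis .
qed


theorem lemma1p1:
  fixes n p :: nat and \<theta> :: "nat \<Rightarrow> nat \<Rightarrow> real" and \<tau> :: "nat \<Rightarrow> real"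
  assumes "1 \<le> p" and "p \<le> n"
    and sym: "\<And>i j. i < n \<Longrightarrow> j < n \<Longrightarrow> \<theta> i j = \<theta> j i"
    and psd: "p_pos_semidef n p (\<lambda>i j. \<theta> i j - \<tau> i * \<tau> j)"
  shows "\<forall>\<xi>\<in>forms n (p - 1).
           wedge1 n \<tau> \<xi> \<in> F_img n p \<theta>
         \<and> (\<forall>f\<in>F_img n p \<theta>.
              form_inner n p (F_inv n p \<theta> f) (wedge1 n \<tau> \<xi>)
                \<le> sqrt (form_inner n p (F_inv n p \<theta> f) f) * form_norm n (p - 1) \<xi>)
         \<and> form_inner n p (F_inv n p \<theta> (wedge1 n \<tau> \<xi>)) (wedge1 n \<tau> \<xi>)
              \<le> (form_norm n (p - 1) \<xi>)\<^sup>2"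
proof -
  note p1 = assms(1) and pn = assms(2)
  define K where "K = idx n p"
  have finK: "finite K" unfolding K_def by simp
  define M where "M I J = F_op n \<theta> (ebas J) I" for I J
  have "\<exists>U l. (\<forall>m\<in>K. \<forall>m'\<in>K. (\<Sum>i\<in>K. U i m * U i m') = (if m = m' then 1 else 0))
          \<and> (\<forall>i\<in>K. \<forall>j\<in>K. (\<Sum>m\<in>K. U i m * U j m) = (if i = j then 1 else 0))
          \<and> (\<forall>i\<in>K. \<forall>j\<in>K. M i j = (\<Sum>m\<in>K. l m * U i m * U j m))"
    by (rule spectral[OF finK]) (use M_sym[OF p1 sym] in \<open>auto simp: M_def K_def\<close>)
  then obtain V \<mu> where Vc: "\<forall>m\<in>K. \<forall>m'\<in>K. (\<Sum>i\<in>K. V i m * V i m') = (if m = m' then 1 else 0)"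
    and Vr: "\<forall>i\<in>K. \<forall>j\<in>K. (\<Sum>m\<in>K. V i m * V j m) = (if i = j then 1 else 0)"
    and Md: "\<forall>i\<in>K. \<forall>j\<in>K. M i j = (\<Sum>m\<in>K. \<mu> m * V i m * V j m)" by blast
  define cf where "cf f m = (\<Sum>I\<in>K. V I m * f I)" for f m
  have Fforms: "F_op n \<theta> g \<in> forms n p" if "g \<in> forms n p" for g using F_forms[OF that p1] .
  have fout: "f I = 0" if "f \<in> forms n p" "I \<notin> K" for f I using forms_out that K_def by blast
  have cf_cong: "cf f1 m = cf f2 m" if "\<And>I. I \<in> K \<Longrightarrow> f1 I = f2 I" for f1 f2 m
    unfolding cf_def using that by simp
  have compl: "f I = (\<Sum>m\<in>K. cf f m * V I m)" if I: "I \<in> K" for f I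
  proof -
    have "(\<Sum>m\<in>K. cf f m * V I m) = (\<Sum>I'\<in>K. f I' * (\<Sum>m\<in>K. V I' m * V I m))"
      unfolding cf_def sum_distrib_left sum_distrib_right by (subst sum.swap) (simp add: mult_ac)
    also have "\<dots> = (\<Sum>I'\<in>K. f I' * (if I' = I then 1 else 0))" using Vr I by (intro sum.cong refl) simp
    also have "\<dots> = f I" using I finK by (simp add: if_distrib[where f="\<lambda>x. _ * x"] sum.delta' cong: if_cong)
    finally show ?thesis by simp
  qed
  have cf_comb: "cf (\<lambda>I. if I \<in> K then \<Sum>m\<in>K. a m * V I m else 0) m' = a m'" if m': "m' \<in> K" for a m'
  proof -
    have "cf (\<lambda>I. if I \<in> K then \<Sum>m\<in>K. a m * V I m else 0) m' = (\<Sum>I\<in>K. V I m' * (\<Sum>m\<in>K. a m * V I m))"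
      unfolding cf_def by (intro sum.cong refl) simp
    also have "\<dots> = (\<Sum>m\<in>K. a m * (\<Sum>I\<in>K. V I m * V I m'))"
      unfolding sum_distrib_left by (subst sum.swap) (simp add: mult_ac)
    also have "\<dots> = (\<Sum>m\<in>K. a m * (if m = m' then 1 else 0))" using Vc m' by (intro sum.cong refl) simp
    also have "\<dots> = a m'" using m' finK by (simp add: if_distrib[where f="\<lambda>x. _ * x"] sum.delta cong: if_cong)
    finally show ?thesis .
  qed
  have Fcf: "F_op n \<theta> g I = (\<Sum>m\<in>K. \<mu> m * cf g m * V I m)" if g: "g \<in> forms n p" and I: "I \<in> K" for g I
  proof -
    have "F_op n \<theta> g I = (\<Sum>J\<in>K. g J * M I J)" unfolding M_def K_def by (rule F_expand[OF g])
    also have "\<dots> = (\<Sum>J\<in>K. g J * (\<Sum>m\<in>K. \<mu> m * V I m * V J m))" using Md I by (intro sum.cong refl) simp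
    also have "\<dots> = (\<Sum>m\<in>K. \<mu> m * cf g m * V I m)"
      unfolding cf_def sum_distrib_left sum_distrib_right by (subst sum.swap) (simp add: mult_ac)
    finally show ?thesis .
  qed
  have Fcf2: "cf (F_op n \<theta> g) m = \<mu> m * cf g m" if g: "g \<in> forms n p" and m: "m \<in> K" for g m
  proof -
    have "cf (F_op n \<theta> g) m = cf (\<lambda>I. if I \<in> K then \<Sum>m\<in>K. (\<mu> m * cf g m) * V I m else 0) m"
      by (rule cf_cong) (simp add: Fcf[OF g])
    thus ?thesis using cf_comb[OF m] by simp
  qed
  define pinv where "pinv f = (\<lambda>I. if I \<in> K then \<Sum>m\<in>K. (if \<mu> m = 0 then 0 else cf f m / \<mu> m) * V I m else 0)" for f
  have pinv_forms: "pinv f \<in> forms n p" for f unfolding pinv_def forms_def K_def idx_def by auto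
  have cf_pinv: "cf (pinv f) m = (if \<mu> m = 0 then 0 else cf f m / \<mu> m)" if "m \<in> K" for f m
    unfolding pinv_def by (rule cf_comb[OF that])
  have solve: "F_op n \<theta> (pinv f) = f" if f: "f \<in> forms n p" and z: "\<forall>m\<in>K. \<mu> m = 0 \<longrightarrow> cf f m = 0" for f
  proof
    fix I show "F_op n \<theta> (pinv f) I = f I"
    proof (cases "I \<in> K")
      case True
      have "F_op n \<theta> (pinv f) I = (\<Sum>m\<in>K. \<mu> m * cf (pinv f) m * V I m)" by (rule Fcf[OF pinv_forms True])
      also have "\<dots> = (\<Sum>m\<in>K. cf f m * V I m)" using z by (intro sum.cong refl) (simp add: cf_pinv)
      also have "\<dots> = f I" using compl[OF True] by simp
      finally show ?thesis .
    next
      case False thus ?thesis using fout[OF Fforms[OF pinv_forms] False] fout[OF f False] by simp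
    qed
  qed
  have img_char: "f \<in> F_img n p \<theta> \<longleftrightarrow> f \<in> forms n p \<and> (\<forall>m\<in>K. \<mu> m = 0 \<longrightarrow> cf f m = 0)" for f
  proof
    assume "f \<in> F_img n p \<theta>"
    then obtain g where g: "g \<in> forms n p" "f = F_op n \<theta> g" unfolding F_img_def by auto
    thus "f \<in> forms n p \<and> (\<forall>m\<in>K. \<mu> m = 0 \<longrightarrow> cf f m = 0)" using Fforms Fcf2 by auto
  next
    assume h: "f \<in> forms n p \<and> (\<forall>m\<in>K. \<mu> m = 0 \<longrightarrow> cf f m = 0)"
    hence "f = F_op n \<theta> (pinv f)" using solve by simp
    thus "f \<in> F_img n p \<theta>" unfolding F_img_def using pinv_forms by blast
  qed
  have Finv: "F_inv n p \<theta> f \<in> F_img n p \<theta> \<and> F_op n \<theta> (F_inv n p \<theta> f) = f" if f: "f \<in> F_img n p \<theta>" for f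
  proof -
    have fz: "f \<in> forms n p" "\<forall>m\<in>K. \<mu> m = 0 \<longrightarrow> cf f m = 0" using f img_char by auto
    have ex: "pinv f \<in> F_img n p \<theta> \<and> F_op n \<theta> (pinv f) = f"
      using img_char[of "pinv f"] pinv_forms cf_pinv solve[OF fz] by auto
    have uniq: "h = pinv f" if h: "h \<in> F_img n p \<theta> \<and> F_op n \<theta> h = f" for h
    proof
      fix I
      have hz: "h \<in> forms n p" "\<forall>m\<in>K. \<mu> m = 0 \<longrightarrow> cf h m = 0" using h img_char by auto
      have "cf h m = cf (pinv f) m" if m: "m \<in> K" for m
      proof (cases "\<mu> m = 0")
        case True thus ?thesis using hz cf_pinv m by simp
      next
        case False
        have "\<mu> m * cf h m = cf f m" using Fcf2[OF hz(1) m] h by simp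
        have "cf (pinv f) m = cf f m / \<mu> m" using cf_pinv[OF m, of f] False by simp
        moreover have "cf h m = cf f m / \<mu> m" using \<open>\<mu> m * cf h m = cf f m\<close> False
          by (simp add: eq_divide_eq mult.commute)
        ultimately show ?thesis by simp
      qed
      thus "h I = pinv f I"
        using compl[of I h] compl[of I "pinv f"] fout[OF hz(1)] fout[OF pinv_forms]
        by (cases "I \<in> K") auto
    qed
    have "F_inv n p \<theta> f = pinv f" unfolding F_inv_def
      by (rule the_equality[where P="\<lambda>g. g \<in> F_img n p \<theta> \<and> F_op n \<theta> g = f", OF ex uniq])
    thus ?thesis using ex by simp
  qed
  show ?thesis
  proof (intro ballI)
    fix \<xi> assume \<xi>: "\<xi> \<in> forms n (p - 1)"
    define v where "v = wedge1 n \<tau> \<xi>"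
    have vf: "v \<in> forms n p" unfolding v_def by (rule wedge1_forms[OF \<xi> p1])
    have adj: "form_inner n p v h = form_inner n (p - 1) \<xi> (iota n \<tau> h)" for h
      unfolding v_def by (rule adjoint[OF p1])
    have vimg: "v \<in> F_img n p \<theta>"
      unfolding img_char
    proof (intro conjI ballI impI vf)
      fix m assume m: "m \<in> K" "\<mu> m = 0"
      define Vm where "Vm = (\<lambda>I. if I \<in> K then V I m else 0)"
      have Vmf: "Vm \<in> forms n p" unfolding Vm_def forms_def K_def idx_def by auto
      have cfVm: "cf Vm m' = (if m' = m then 1 else 0)" if m': "m' \<in> K" for m'
      proof -
        have "cf Vm m' = (\<Sum>I\<in>K. V I m' * V I m)" unfolding cf_def Vm_def by (intro sum.cong refl) simp
        thus ?thesis using Vc m' m by auto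
      qed
      have FVm: "F_op n \<theta> Vm I = 0" for I
      proof (cases "I \<in> K")
        case True
        have "F_op n \<theta> Vm I = (\<Sum>m'\<in>K. \<mu> m' * cf Vm m' * V I m')" by (rule Fcf[OF Vmf True])
        also have "\<dots> = (\<Sum>m'\<in>K. (if m' = m then \<mu> m * V I m else 0))"
          by (intro sum.cong refl) (simp add: cfVm)
        also have "\<dots> = 0" using m finK by simp
        finally show ?thesis .
      next
        case False thus ?thesis using fout[OF Fforms[OF Vmf] False] by simp
      qed
      have "form_inner n p (F_op n \<theta> Vm) Vm = 0" unfolding form_inner_def FVm by simp
      hence "form_inner n (p - 1) (iota n \<tau> Vm) (iota n \<tau> Vm) \<le> 0"
        using key_ineq[OF p1 pn sym psd, of Vm] by simp
      hence "form_inner n (p - 1) (iota n \<tau> Vm) (iota n \<tau> Vm) = 0"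
        using form_inner_nonneg[of n "p - 1" "iota n \<tau> Vm"] by linarith
      hence "\<forall>I\<in>idx n (p - 1). iota n \<tau> Vm I * iota n \<tau> Vm I = 0"
        unfolding form_inner_def by (subst (asm) sum_nonneg_eq_0_iff) auto
      hence "form_inner n (p - 1) \<xi> (iota n \<tau> Vm) = 0" unfolding form_inner_def by simp
      hence "form_inner n p v Vm = 0" using adj by simp
      moreover have "cf v m = form_inner n p v Vm"
        unfolding cf_def form_inner_def Vm_def K_def by (intro sum.cong refl) simp
      ultimately show "cf v m = 0" by simp
    qed
    have Nn: "form_norm n (p - 1) \<xi> = sqrt (form_inner n (p - 1) \<xi> \<xi>)" by (simp add: form_norm_def)
    have main: "form_inner n p (F_inv n p \<theta> f) v \<le> sqrt (form_inner n p (F_inv n p \<theta> f) f) * form_norm n (p - 1) \<xi>"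
      if f: "f \<in> F_img n p \<theta>" for f
    proof -
      define h where "h = F_inv n p \<theta> f"
      have h: "F_op n \<theta> h = f" using Finv[OF f] h_def by auto
      have "form_inner n p h v = form_inner n (p - 1) \<xi> (iota n \<tau> h)"
        using adj[of h] form_inner_sym[of n p h v] by simp
      also have "\<dots> \<le> sqrt (form_inner n (p - 1) \<xi> \<xi>) * sqrt (form_inner n (p - 1) (iota n \<tau> h) (iota n \<tau> h))"
        by (rule form_CS)
      also have "\<dots> \<le> sqrt (form_inner n (p - 1) \<xi> \<xi>) * sqrt (form_inner n p h f)"
      proof (rule mult_left_mono)
        show "sqrt (form_inner n (p - 1) (iota n \<tau> h) (iota n \<tau> h)) \<le> sqrt (form_inner n p h f)"
          using key_ineq[OF p1 pn sym psd, of h] h form_inner_sym[of n p f h] by (simp add: real_sqrt_le_mono)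
      qed (simp add: form_inner_nonneg)
      finally show ?thesis unfolding h_def Nn by (simp add: mult.commute)
    qed
    show "wedge1 n \<tau> \<xi> \<in> F_img n p \<theta>
         \<and> (\<forall>f\<in>F_img n p \<theta>.
              form_inner n p (F_inv n p \<theta> f) (wedge1 n \<tau> \<xi>)
                \<le> sqrt (form_inner n p (F_inv n p \<theta> f) f) * form_norm n (p - 1) \<xi>)
         \<and> form_inner n p (F_inv n p \<theta> (wedge1 n \<tau> \<xi>)) (wedge1 n \<tau> \<xi>)
              \<le> (form_norm n (p - 1) \<xi>)\<^sup>2"
      unfolding v_def[symmetric]
    proof (intro conjI ballI)
      show "v \<in> F_img n p \<theta>" by (rule vimg)
      show "form_inner n p (F_inv n p \<theta> f) v \<le> sqrt (form_inner n p (F_inv n p \<theta> f) f) * form_norm n (p - 1) \<xi>"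
        if "f \<in> F_img n p \<theta>" for f using main[OF that] .
      define q where "q = form_inner n p (F_inv n p \<theta> v) v"
      define N where "N = form_norm n (p - 1) \<xi>"
      have N0: "0 \<le> N" unfolding N_def Nn by (simp add: form_inner_nonneg)
      have q0: "0 \<le> q"
      proof -
        define h where "h = F_inv n p \<theta> v"
        have h: "F_op n \<theta> h = v" using Finv[OF vimg] h_def by auto
        have "form_inner n (p - 1) (iota n \<tau> h) (iota n \<tau> h) \<le> form_inner n p (F_op n \<theta> h) h"
          by (rule key_ineq[OF p1 pn sym psd])
        thus ?thesis unfolding q_def h_def[symmetric] using h form_inner_nonneg[of n "p - 1" "iota n \<tau> h"]
          form_inner_sym[of n p v h] by simp
      qed
      have qm: "q \<le> sqrt q * N" using main[OF vimg] unfolding q_def N_def .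
      show "q \<le> N\<^sup>2" unfolding q_def[symmetric] N_def[symmetric]
      proof (cases "q = 0")
        case True thus ?thesis by simp
      next
        case False
        hence sq: "0 < sqrt q" using q0 by simp
        have "sqrt q * sqrt q \<le> sqrt q * N" using qm q0 by simp
        hence "sqrt q \<le> N" using mult_le_cancel_left_pos[OF sq] by blast
        hence "(sqrt q)\<^sup>2 \<le> N\<^sup>2" using sq by (intro power_mono) auto
        thus ?thesis using q0 by simp
      qed
    qed
  qed
qed


end
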